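(* Let $\mathcal T\colon\mathbb{R}^s\to\mathbb{R}^s$ be a diffeomorphism with Lipschitz constants $\mathrm{Lip}(\mathcal T)\le K$ and $\mathrm{Lip}(\mathcal T^{-1})\le L$, and let $P_Z=\mathcal N(0,I)$ be the standard normal distribution on $\mathbb{R}^s$. Then for every $\mathrm{p}\in\mathbb{R}^s$, $$\frac{1}{L^sK^s}\,\mathcal N\big(\mathrm{p}\,\big|\,\mathcal T(0),\tfrac{1}{L^2}I\big)\le p_{\mathcal T_\#P_Z}(\mathrm{p})\le L^sK^s\,\mathcal N\big(\mathrm{p}\,\big|\,\mathcal T(0),K^2I\big).$$
   Context: $\mathcal T_\#P_Z=P_Z\circ\mathcal T^{-1}$ is the push-forward of $P_Z$ under $\mathcal T$, and $p_{\mathcal T_\#P_Z}$ its density, given by $p_{\mathcal T_\#P_Z}(\mathrm p)=p_Z(\mathcal T^{-1}(\mathrm p))\,|\det(\nabla\mathcal T^{-1}(\mathrm p))|$ where $p_Z$ is the standard normal density. $\mathcal N(\mathrm p\mid \mu,\Sigma)$ denotes the density at $\mathrm p$ of the normal distribution with mean $\mu$ and covariance $\Sigma$. *)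

theory Defs
  imports "HOL-Analysis.Analysis"
begin

definition C1_map :: "(real^'n \<Rightarrow> real^'n) \<Rightarrow> bool" where
  "C1_map f \<longleftrightarrow> (\<exists>f'. (\<forall>x. (f has_derivative f' x) (at x)) \<and>
                        continuous_on UNIV (\<lambda>x. matrix (f' x)))"

definition diffeomorphism :: "(real^'n \<Rightarrow> real^'n) \<Rightarrow> bool" where
  "diffeomorphism T \<longleftrightarrow> bij T \<and> C1_map T \<and> C1_map (inv T)"

definition normal_density :: "real^'n \<Rightarrow> real^'n^'n \<Rightarrow> real^'n \<Rightarrow> real" where
  "normal_density mu S x =
     (2 * pi) powr (- real CARD('n) / 2) * (det S) powr (- 1 / 2) *
     exp (- ((x - mu) \<bullet> (matrix_inv S *v (x - mu))) / 2)"

definition pushforward_std_normal_density :: "(real^'n \<Rightarrow> real^'n) \<Rightarrow> real^'n \<Rightarrow> real" where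
  "pushforward_std_normal_density T y =
     normal_density 0 (mat 1) (inv T y) * \<bar>det (jacobian (inv T) (at y))\<bar>"

end

theory Submission
  imports Defs
begin

lemma scal_inv:
  fixes c :: real
  assumes "c \<noteq> 0"
  shows "matrix_inv (c *\<^sub>R (mat 1 :: real^'n^'n)) = (1/c) *\<^sub>R mat 1"
proof -
  let ?A = "c *\<^sub>R (mat 1 :: real^'n^'n)"
  have ex: "?A ** ((1/c) *\<^sub>R mat 1) = mat 1 \<and> ((1/c) *\<^sub>R mat 1) ** ?A = mat 1"
    using assms by (simp add: scalar_matrix_assoc[symmetric])
  have "?A ** matrix_inv ?A = mat 1 \<and> matrix_inv ?A ** ?A = mat 1"
    unfolding matrix_inv_def by (rule someI_ex) (use ex in blast)
  then have "?A ** matrix_inv ?A = mat 1" by blast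
  then have "c *\<^sub>R matrix_inv ?A = mat 1"
    by (simp add: scalar_matrix_assoc[symmetric])
  then have "(1/c) *\<^sub>R (c *\<^sub>R matrix_inv ?A) = (1/c) *\<^sub>R mat 1" by simp
  then show ?thesis using assms by simp
qed

lemma det_scal: "det (c *\<^sub>R (mat 1 :: real^'n^'n)) = c ^ CARD('n)"
  by (subst det_diagonal) (auto simp: mat_def)

lemma pow_limit:
  fixes x y F :: real
  assumes "x \<ge> 0" "y \<ge> 0" "\<And>k. x ^ k \<le> F * y ^ k"
  shows "x \<le> y"
proof (rule ccontr)
  assume "\<not> x \<le> y"
  hence xy: "y < x" by simp
  show False
  proof (cases "y = 0")
    case True
    then show ?thesis using assms(3)[of 1] xy by simp
  next
    case False
    hence yp: "y > 0" using assms by simp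
    have "1 < x / y" using xy yp by simp
    then obtain k where k: "F < (x/y)^k" using real_arch_pow by blast
    have "(x/y)^k = x^k / y^k" by (simp add: power_divide)
    also have "\<dots> \<le> F" using assms(3)[of k] yp by (simp add: divide_le_eq)
    finally show False using k by simp
  qed
qed

lemma det_entry_bound:
  fixes B :: "real^'n^'n"
  assumes "\<And>i j. \<bar>B$i$j\<bar> \<le> M"
  shows "\<bar>det B\<bar> \<le> real (card {p. p permutes (UNIV::'n set)}) * M ^ CARD('n)"
proof -
  have M0: "0 \<le> M" using assms[of undefined undefined] by linarith
  have "\<bar>det B\<bar> \<le> (\<Sum>p\<in>{p. p permutes (UNIV::'n set)}. \<bar>of_int (sign p) * (\<Prod>i\<in>UNIV. B $ i $ p i)\<bar>)"
    unfolding det_def by (rule sum_abs)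
  also have "\<dots> \<le> (\<Sum>p\<in>{p. p permutes (UNIV::'n set)}. M ^ CARD('n))"
  proof (rule sum_mono)
    fix p assume "p \<in> {p. p permutes (UNIV::'n set)}"
    have "\<bar>of_int (sign p) * (\<Prod>i\<in>UNIV. B $ i $ p i)\<bar> = (\<Prod>i\<in>UNIV. \<bar>B $ i $ p i\<bar>)"
      by (simp add: abs_mult abs_prod sign_def)
    also have "\<dots> \<le> (\<Prod>i\<in>(UNIV::'n set). M)"
      by (rule prod_mono) (use assms in auto)
    finally show "\<bar>of_int (sign p) * (\<Prod>i\<in>UNIV. B $ i $ p i)\<bar> \<le> M ^ CARD('n)" by simp
  qed
  finally show ?thesis by simp
qed

lemma det_norm_bound:
  fixes A :: "real^'n^'n"
  assumes c: "c \<ge> 0" and bd: "\<And>x. norm (A *v x) \<le> c * norm x"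
  shows "\<bar>det A\<bar> \<le> c ^ CARD('n)"
proof -
  define P where "P k = (((**) A) ^^ k) (mat 1)" for k
  have Pv: "norm (P k *v x) \<le> c ^ k * norm x" for k x
  proof (induction k arbitrary: x)
    case 0 then show ?case by (simp add: P_def)
  next
    case (Suc k)
    have "P (Suc k) *v x = A *v (P k *v x)" by (simp add: P_def matrix_vector_mul_assoc)
    also have "norm \<dots> \<le> c * norm (P k *v x)" by (rule bd)
    also have "\<dots> \<le> c * (c ^ k * norm x)" using Suc c by (simp add: mult_left_mono)
    finally show ?case by simp
  qed
  have Pd: "det (P k) = det A ^ k" for k
    by (induction k) (simp_all add: P_def det_mul)
  have "\<bar>det A\<bar> ^ k \<le> real (card {p. p permutes (UNIV::'n set)}) * (c ^ CARD('n)) ^ k" for k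
  proof -
    have "\<bar>P k $ i $ j\<bar> \<le> c ^ k" for i j
    proof -
      have "P k $ i $ j = (P k *v axis j 1) $ i"
        by (simp add: matrix_vector_mult_basis column_def)
      also have "\<bar>\<dots>\<bar> \<le> norm (P k *v axis j 1)" by (rule component_le_norm_cart)
      also have "\<dots> \<le> c ^ k" using Pv[of k "axis j 1"] by simp
      finally show ?thesis .
    qed
    from det_entry_bound[OF this] have "\<bar>det A ^ k\<bar> \<le> real (card {p. p permutes (UNIV::'n set)}) * (c ^ k) ^ CARD('n)"
      by (simp add: Pd)
    moreover have "(c ^ k) ^ CARD('n) = (c ^ CARD('n)) ^ k"
      by (metis power_mult mult.commute)
    ultimately show ?thesis by (simp add: power_abs)
  qed
  then show ?thesis
    using pow_limit[of "\<bar>det A\<bar>" "c ^ CARD('n)" "real (card {p. p permutes (UNIV::'n set)})"] c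
    by simp
qed


lemma deriv_lip_bound:
  fixes f :: "'a::real_normed_vector \<Rightarrow> 'b::real_normed_vector"
  assumes d: "(f has_derivative f') (at x)" and lip: "L-lipschitz_on UNIV f"
  shows "norm (f' h) \<le> L * norm h"
proof (cases "h = 0")
  case True
  have "linear f'" using d has_derivative_linear by blast
  then show ?thesis using True by (simp add: linear_0)
next
  case False
  hence nh: "norm h > 0" by simp
  have bl: "bounded_linear f'" using d has_derivative_bounded_linear by blast
  show ?thesis
  proof (rule field_le_epsilon)
    fix e :: real assume e: "e > 0"
    define e' where "e' = e / norm h"
    have e': "e' > 0" using e nh by (simp add: e'_def)
    obtain d where d0: "d > 0" and dd: "\<And>y. norm (y - x) < d \<Longrightarrow> norm (f y - f x - f' (y - x)) \<le> e' * norm (y - x)"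
      using d e' unfolding has_derivative_at_alt by blast
    define t where "t = d / (2 * norm h)"
    have t0: "t > 0" using d0 nh by (simp add: t_def)
    have nt: "norm ((x + t *\<^sub>R h) - x) = t * norm h" using t0 by simp
    have "t * norm h < d" using d0 nh by (simp add: t_def)
    then have b1: "norm (f (x + t *\<^sub>R h) - f x - f' (t *\<^sub>R h)) \<le> e' * (t * norm h)"
      using dd[of "x + t *\<^sub>R h"] nt by (simp only: add_diff_cancel_left')
    have b2: "norm (f (x + t *\<^sub>R h) - f x) \<le> L * (t * norm h)"
      using lipschitz_onD[OF lip, of "x + t *\<^sub>R h" x] t0 by (simp add: dist_norm)
    have "norm (f' (t *\<^sub>R h)) \<le> norm (f (x + t *\<^sub>R h) - f x) + norm (f (x + t *\<^sub>R h) - f x - f' (t *\<^sub>R h))"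
      by (metis add_diff_cancel_left' diff_add_cancel norm_triangle_ineq4 order_refl add.commute norm_minus_commute norm_triangle_sub)
    also have "\<dots> \<le> L * (t * norm h) + e' * (t * norm h)" using b1 b2 by linarith
    finally have "t * norm (f' h) \<le> t * (L * norm h + e' * norm h)"
      using t0 by (simp add: linear_scale[OF bounded_linear.linear[OF bl]] algebra_simps)
    then have "norm (f' h) \<le> L * norm h + e' * norm h" using t0 by simp
    then show "norm (f' h) \<le> L * norm h + e" using nh by (simp add: e'_def)
  qed
qed

lemma nd_scal:
  fixes mu x :: "real^'n"
  assumes c: "c > 0"
  shows "normal_density mu (c *\<^sub>R mat 1) x =
    (2 * pi) powr (- real CARD('n) / 2) * (c ^ CARD('n)) powr (- 1 / 2) * exp (- (norm (x - mu) ^ 2 / c) / 2)"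
proof -
  have "matrix_inv (c *\<^sub>R (mat 1 :: real^'n^'n)) *v (x - mu) = (1/c) *\<^sub>R (x - mu)"
    using c by (simp add: scal_inv scaleR_matrix_vector_assoc[symmetric])
  then show ?thesis
    unfolding normal_density_def det_scal
    by (simp add: power2_norm_eq_inner)
qed

lemma powr_aux:
  fixes a :: real
  assumes "a > 0"
  shows "((a ^ 2) ^ n) powr (- 1 / 2) = 1 / a ^ n"
proof -
  have "(a ^ 2) ^ n = (a ^ n) powr 2"
    using assms by (simp add: powr_realpow power_mult[symmetric] mult.commute flip: power_mult)
  then have "((a ^ 2) ^ n) powr (- 1 / 2) = (a ^ n) powr (2 * (-1/2))"
    by (simp add: powr_powr)
  also have "\<dots> = 1 / a ^ n" using assms by (simp add: powr_minus_divide powr_realpow)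
  finally show ?thesis .
qed


theorem lemma2:
  fixes T :: "real^'n \<Rightarrow> real^'n" and K L :: real and p :: "real^'n"
  assumes "diffeomorphism T"
    and "K-lipschitz_on UNIV T"
    and "L-lipschitz_on UNIV (inv T)"
  shows "1 / (L ^ CARD('n) * K ^ CARD('n)) * normal_density (T 0) ((1 / L\<^sup>2) *\<^sub>R mat 1) p
           \<le> pushforward_std_normal_density T p
         \<and> pushforward_std_normal_density T p
           \<le> L ^ CARD('n) * K ^ CARD('n) * normal_density (T 0) (K\<^sup>2 *\<^sub>R mat 1) p"
proof -
  let ?n = "CARD('n)"
  let ?g = "inv T"
  have bij: "bij T" and c1T: "C1_map T" and c1g: "C1_map ?g"
    using assms(1) unfolding diffeomorphism_def by auto
  obtain T' where dT: "\<And>x. (T has_derivative T' x) (at x)"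
    using c1T unfolding C1_map_def by blast
  obtain g' where dg: "\<And>x. (?g has_derivative g' x) (at x)"
    using c1g unfolding C1_map_def by blast
  have K0: "K \<ge> 0" using assms(2) lipschitz_on_nonneg by blast
  have L0: "L \<ge> 0" using assms(3) lipschitz_on_nonneg by blast
  define q where "q = ?g p"
  have Tq: "T q = p" unfolding q_def using bij by (simp add: bij_is_surj surj_f_inv_f)
  have g0: "?g (T 0) = 0" using bij by (simp add: bij_is_inj)
  have comp: "(\<lambda>x. T (?g x)) = (\<lambda>x. x)" using bij by (simp add: bij_is_surj surj_f_inv_f)
  have "((\<lambda>x. T (?g x)) has_derivative (\<lambda>h. T' (?g p) (g' p h))) (at p)"
    by (rule has_derivative_compose[OF dg dT])
  then have "((\<lambda>x. x) has_derivative (\<lambda>h. T' q (g' p h))) (at p)"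
    by (simp add: comp q_def)
  then have idc: "(\<lambda>h. T' q (g' p h)) = (\<lambda>h. h)"
    using has_derivative_unique has_derivative_ident by blast
  have linT: "linear (T' q)" using dT has_derivative_linear by blast
  have ling: "linear (g' p)" using dg has_derivative_linear by blast
  have "matrix (T' q \<circ> g' p) = matrix (T' q) ** matrix (g' p)"
    by (rule matrix_compose[OF ling linT])
  moreover have "T' q \<circ> g' p = id" using idc by (simp add: fun_eq_iff)
  ultimately have detprod: "det (matrix (T' q)) * det (matrix (g' p)) = 1"
    by (metis det_mul matrix_id)
  have jac: "jacobian ?g (at p) = matrix (g' p)"
    unfolding jacobian_def using frechet_derivative_at[OF dg[of p]] by simp
  have bT: "\<bar>det (matrix (T' q))\<bar> \<le> K ^ ?n"
    by (rule det_norm_bound[OF K0]) (simp add: matrix_works linT deriv_lip_bound[OF dT assms(2)])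
  have bg: "\<bar>det (matrix (g' p))\<bar> \<le> L ^ ?n"
    by (rule det_norm_bound[OF L0]) (simp add: matrix_works ling deriv_lip_bound[OF dg assms(3)])
  have n0: "?n > 0" by simp
  have dT0: "\<bar>det (matrix (T' q))\<bar> > 0" using detprod by auto
  have dg0: "\<bar>det (matrix (g' p))\<bar> > 0" using detprod by auto
  have Kn: "K ^ ?n > 0" using bT dT0 by linarith
  have Ln: "L ^ ?n > 0" using bg dg0 by linarith
  have Kp: "K > 0" using Kn K0 n0 by (cases "K = 0") (auto simp: power_0_left)
  have Lp: "L > 0" using Ln L0 n0 by (cases "L = 0") (auto simp: power_0_left)
  define J where "J = \<bar>det (matrix (g' p))\<bar>"
  have JL: "J \<le> L ^ ?n" using bg J_def by simp
  have JK: "1 / K ^ ?n \<le> J"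
  proof -
    have "\<bar>det (matrix (T' q))\<bar> * J = 1" unfolding J_def using detprod by (metis abs_mult abs_one)
    then have "J = 1 / \<bar>det (matrix (T' q))\<bar>" using dT0 by (simp add: field_simps)
    moreover have "1 / K ^ ?n \<le> 1 / \<bar>det (matrix (T' q))\<bar>"
      by (rule divide_left_mono) (use bT dT0 Kn in auto)
    ultimately show ?thesis by simp
  qed
  define A where "A = (2 * pi) powr (- real ?n / 2)"
  have A0: "A > 0" by (simp add: A_def)
  define d where "d = norm (p - T 0)"
  have push: "pushforward_std_normal_density T p = A * exp (- (norm q ^ 2) / 2) * J"
  proof -
    have "normal_density 0 (mat 1) q = normal_density 0 (1 *\<^sub>R mat 1) q" by simp
    also have "\<dots> = A * exp (- (norm q ^ 2) / 2)" by (subst nd_scal) (simp_all add: A_def)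
    finally show ?thesis unfolding pushforward_std_normal_density_def jac J_def q_def by simp
  qed
  have lowN: "normal_density (T 0) ((1 / L\<^sup>2) *\<^sub>R mat 1) p = A * L ^ ?n * exp (- (L^2 * d^2) / 2)"
  proof -
    have "((1 / L\<^sup>2) ^ ?n) powr (- 1 / 2) = L ^ ?n"
      using powr_aux[of "1/L" ?n] Lp by (simp add: power_divide)
    then show ?thesis using Lp by (subst nd_scal) (simp_all add: A_def d_def)
  qed
  have upN: "normal_density (T 0) (K\<^sup>2 *\<^sub>R mat 1) p = A * (1 / K ^ ?n) * exp (- (d^2 / K^2) / 2)"
  proof -
    have "((K\<^sup>2) ^ ?n) powr (- 1 / 2) = 1 / K ^ ?n" using powr_aux[of K ?n] Kp by simp
    then show ?thesis using Kp by (subst nd_scal) (simp_all add: A_def d_def)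
  qed
  have qL: "norm q \<le> L * d"
    using lipschitz_onD[OF assms(3), of p "T 0"] g0 by (simp add: q_def d_def dist_norm)
  have dK: "d \<le> K * norm q"
    using lipschitz_onD[OF assms(2), of q 0] Tq by (simp add: d_def dist_norm)
  have e1: "exp (- (L^2 * d^2) / 2) \<le> exp (- (norm q ^ 2) / 2)"
  proof -
    have "norm q ^ 2 \<le> (L * d) ^ 2" using qL by (simp add: power_mono)
    then show ?thesis by (simp add: power_mult_distrib)
  qed
  have e2: "exp (- (norm q ^ 2) / 2) \<le> exp (- (d^2 / K^2) / 2)"
  proof -
    have "d ^ 2 \<le> (K * norm q) ^ 2" using dK by (simp add: d_def power_mono)
    then have "d ^ 2 / K^2 \<le> norm q ^ 2" using Kp by (simp add: divide_le_eq power_mult_distrib mult.commute)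
    then show ?thesis by simp
  qed
  show ?thesis
  proof
    have "1 / (L ^ ?n * K ^ ?n) * normal_density (T 0) ((1 / L\<^sup>2) *\<^sub>R mat 1) p
        = A * exp (- (L^2 * d^2) / 2) * (1 / K ^ ?n)"
      unfolding lowN using Ln Lp Kp by (simp add: field_simps)
    also have "\<dots> \<le> A * exp (- (norm q ^ 2) / 2) * J"
      using A0 e1 JK Kn by (intro mult_mono) auto
    finally show "1 / (L ^ ?n * K ^ ?n) * normal_density (T 0) ((1 / L\<^sup>2) *\<^sub>R mat 1) p
           \<le> pushforward_std_normal_density T p" unfolding push .
  next
    have "A * exp (- (norm q ^ 2) / 2) * J \<le> A * exp (- (d^2 / K^2) / 2) * L ^ ?n"
      using A0 e2 JL JK Kn by (intro mult_mono) (auto intro: order_trans[rotated])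
    also have "\<dots> = L ^ ?n * K ^ ?n * normal_density (T 0) (K\<^sup>2 *\<^sub>R mat 1) p"
      unfolding upN using Kn Kp by (simp add: field_simps)
    finally show "pushforward_std_normal_density T p
           \<le> L ^ ?n * K ^ ?n * normal_density (T 0) (K\<^sup>2 *\<^sub>R mat 1) p" unfolding push .
  qed
qed

end
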